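(* Let $G=(V,E)$ be a directed graph on $n$ nodes in which every node has a self-loop, let $P$ be an $n\times n$ right stochastic matrix supported on the edges of $G$, let $D$ be diagonal with entries $D_{uu}=p_{uu'}\in[0,1]$, $\tilde P=(\mathbf I_n-D)P$, $p^{(t)}_{uv}=(P^t)_{uv}$, $\tilde p^{(t)}_{uv}=(\tilde P^t)_{uv}$. For $u\neq w$ define $\pi_{uw}=\sum_{t\ge1}\tilde p^{(t)}_{uw}\,p_{ww'}$. Then for all $u\neq w$ in $V$, $$(1-p_{uu'})\Big(\sum_{t\ge1}\big(\min_{x\in V}(1-p_{xx'})\big)^{t-1}p^{(t)}_{uw}\Big)p_{ww'}\ \le\ \pi_{uw}\ \le\ (1-p_{uu'})\Big(\sum_{t\ge1}\big(\max_{x\in V}(1-p_{xx'})\big)^{t-1}p^{(t)}_{uw}\Big)p_{ww'}.$$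
   Context: $p_{uu'}$ is the probability that a random walker at $u$ is absorbed at an auxiliary absorbing node $u'$; $\pi_{uw}$ is the probability that a walker started at $u$ is eventually absorbed at (the auxiliary node of) $w$. *)

theory Defs
  imports "HOL-Analysis.Analysis"
begin

primrec mat_pow :: "('v::finite \<Rightarrow> 'v \<Rightarrow> real) \<Rightarrow> nat \<Rightarrow> 'v \<Rightarrow> 'v \<Rightarrow> real" where
  "mat_pow A 0 = (\<lambda>u v. if u = v then 1 else 0)"
| "mat_pow A (Suc k) = (\<lambda>u v. \<Sum>x\<in>UNIV. mat_pow A k u x * A x v)"

definition right_stochastic :: "('v::finite \<Rightarrow> 'v \<Rightarrow> real) \<Rightarrow> bool" where
  "right_stochastic P \<longleftrightarrow> (\<forall>u v. P u v \<ge> 0) \<and> (\<forall>u. (\<Sum>v\<in>UNIV. P u v) = 1)"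

text \<open>tilde P = (I - D) P, where D = diag(d), d u = p_{uu'}.\<close>
definition tilde_P :: "('v::finite \<Rightarrow> real) \<Rightarrow> ('v \<Rightarrow> 'v \<Rightarrow> real) \<Rightarrow> 'v \<Rightarrow> 'v \<Rightarrow> real" where
  "tilde_P d P = (\<lambda>u v. (1 - d u) * P u v)"

definition absorb_prob :: "('v::finite \<Rightarrow> real) \<Rightarrow> ('v \<Rightarrow> 'v \<Rightarrow> real) \<Rightarrow> 'v \<Rightarrow> 'v \<Rightarrow> ennreal" where
  "absorb_prob d P u w = (\<Sum>t. ennreal (mat_pow (tilde_P d P) (Suc t) u w * d w))"

end

theory Submission
  imports Defs
begin

lemma mat_pow_nonneg:
  assumes "\<forall>u v. A u v \<ge> 0"
  shows "mat_pow A k x v \<ge> 0"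
  using assms by (induction k arbitrary: v) (auto intro!: sum_nonneg mult_nonneg_nonneg)

lemma tilde_bounds:
  fixes P :: "'v::finite \<Rightarrow> 'v \<Rightarrow> real"
  assumes Pnn: "\<forall>u v. P u v \<ge> 0"
    and d_range: "\<forall>u. 0 \<le> d u \<and> d u \<le> 1"
    and m0: "0 \<le> m" and mle: "\<forall>y. m \<le> 1 - d y" and Mge: "\<forall>y. 1 - d y \<le> M"
  shows "(1 - d x) * m ^ k * mat_pow P (Suc k) x v \<le> mat_pow (tilde_P d P) (Suc k) x v
       \<and> mat_pow (tilde_P d P) (Suc k) x v \<le> (1 - d x) * M ^ k * mat_pow P (Suc k) x v"
proof (induction k arbitrary: v)
  case 0
  have "mat_pow (tilde_P d P) (Suc 0) x v = (1 - d x) * P x v"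
  proof -
    have "mat_pow (tilde_P d P) (Suc 0) x v
        = (\<Sum>xa\<in>UNIV. (if x = xa then 1 else 0) * ((1 - d xa) * P xa v))"
      by (simp add: tilde_P_def)
    also have "\<dots> = (\<Sum>xa\<in>UNIV. if x = xa then (1 - d xa) * P xa v else 0)"
      by (rule sum.cong) auto
    also have "\<dots> = (1 - d x) * P x v" by (simp add: sum.delta')
    finally show ?thesis .
  qed
  moreover have "mat_pow P (Suc 0) x v = P x v"
  proof -
    have "mat_pow P (Suc 0) x v = (\<Sum>xa\<in>UNIV. (if x = xa then 1 else 0) * P xa v)"
      by simp
    also have "\<dots> = (\<Sum>xa\<in>UNIV. if x = xa then P xa v else 0)"
      by (rule sum.cong) auto
    also have "\<dots> = P x v" by (simp add: sum.delta')
    finally show ?thesis .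
  qed
  ultimately show ?case by simp
next
  case (Suc k)
  have nn: "\<And>y. mat_pow P (Suc k) x y \<ge> 0" using mat_pow_nonneg[OF Pnn] by blast
  have dx: "1 - d x \<ge> 0" using d_range by auto
  have "(1 - d x) * m ^ Suc k * mat_pow P (Suc (Suc k)) x v
      = (\<Sum>y\<in>UNIV. ((1 - d x) * m ^ k * mat_pow P (Suc k) x y) * (m * P y v))"
    by (simp add: sum_distrib_left algebra_simps)
  also have "\<dots> \<le> (\<Sum>y\<in>UNIV. mat_pow (tilde_P d P) (Suc k) x y * tilde_P d P y v)"
  proof (rule sum_mono)
    fix y
    have a: "0 \<le> (1 - d x) * m ^ k * mat_pow P (Suc k) x y"
      using dx m0 nn[of y] by simp
    have b: "m * P y v \<le> tilde_P d P y v"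
      unfolding tilde_P_def using mle Pnn by (simp add: mult_right_mono)
    have c: "0 \<le> m * P y v" using m0 Pnn by simp
    show "((1 - d x) * m ^ k * mat_pow P (Suc k) x y) * (m * P y v)
          \<le> mat_pow (tilde_P d P) (Suc k) x y * tilde_P d P y v"
      using Suc.IH[of y] a b c by (meson mult_mono order_trans)
  qed
  also have "\<dots> = mat_pow (tilde_P d P) (Suc (Suc k)) x v" by simp
  finally have L: "(1 - d x) * m ^ Suc k * mat_pow P (Suc (Suc k)) x v
      \<le> mat_pow (tilde_P d P) (Suc (Suc k)) x v" .
  have "mat_pow (tilde_P d P) (Suc (Suc k)) x v
      = (\<Sum>y\<in>UNIV. mat_pow (tilde_P d P) (Suc k) x y * tilde_P d P y v)" by simp
  also have "\<dots> \<le> (\<Sum>y\<in>UNIV. ((1 - d x) * M ^ k * mat_pow P (Suc k) x y) * (M * P y v))"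
  proof (rule sum_mono)
    fix y
    have tnn: "0 \<le> mat_pow (tilde_P d P) (Suc k) x y"
      by (rule mat_pow_nonneg) (use Pnn d_range in \<open>auto simp: tilde_P_def\<close>)
    have b: "tilde_P d P y v \<le> M * P y v"
      unfolding tilde_P_def using Mge Pnn by (simp add: mult_right_mono)
    have c: "0 \<le> tilde_P d P y v" unfolding tilde_P_def using Pnn d_range by simp
    show "mat_pow (tilde_P d P) (Suc k) x y * tilde_P d P y v
          \<le> ((1 - d x) * M ^ k * mat_pow P (Suc k) x y) * (M * P y v)"
      using Suc.IH[of y] tnn b c by (meson mult_mono order_trans)
  qed
  also have "\<dots> = (1 - d x) * M ^ Suc k * mat_pow P (Suc (Suc k)) x v"
    by (simp add: sum_distrib_left algebra_simps)
  finally show ?case using L by simp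
qed

theorem lemma3:
  fixes E :: "('v::finite \<times> 'v) set"
    and P :: "'v \<Rightarrow> 'v \<Rightarrow> real"
    and d :: "'v \<Rightarrow> real"
  assumes self_loops: "\<forall>u. (u, u) \<in> E"
    and stoch: "right_stochastic P"
    and support: "\<forall>u v. P u v \<noteq> 0 \<longrightarrow> (u, v) \<in> E"
    and d_range: "\<forall>u. 0 \<le> d u \<and> d u \<le> 1"
    and uw: "u \<noteq> w"
  shows "ennreal (1 - d u)
           * (\<Sum>t. ennreal ((Min (range (\<lambda>x. 1 - d x))) ^ t * mat_pow P (Suc t) u w))
           * ennreal (d w)
         \<le> absorb_prob d P u w
       \<and> absorb_prob d P u w
         \<le> ennreal (1 - d u)
           * (\<Sum>t. ennreal ((Max (range (\<lambda>x. 1 - d x))) ^ t * mat_pow P (Suc t) u w))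
           * ennreal (d w)"
proof -
  define m where "m = Min (range (\<lambda>x. 1 - d x))"
  define M where "M = Max (range (\<lambda>x. 1 - d x))"
  have Pnn: "\<forall>u v. P u v \<ge> 0" using stoch by (simp add: right_stochastic_def)
  have m0: "0 \<le> m" unfolding m_def using d_range by (subst Min_ge_iff) auto
  have mle: "\<forall>y. m \<le> 1 - d y" unfolding m_def by (auto intro: Min_le)
  have Mge: "\<forall>y. 1 - d y \<le> M" unfolding M_def by (auto intro: Max_ge)
  have M0: "0 \<le> M" using Mge d_range order_trans by (metis diff_ge_0_iff_ge)
  note B = tilde_bounds[OF Pnn d_range m0 mle Mge, of u]
  have du: "0 \<le> 1 - d u" and dw: "0 \<le> d w" using d_range by auto
  have nnP: "\<And>t. 0 \<le> mat_pow P (Suc t) u w" using mat_pow_nonneg[OF Pnn] by blast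
  have "ennreal (1 - d u) * (\<Sum>t. ennreal (m ^ t * mat_pow P (Suc t) u w)) * ennreal (d w)
      = (\<Sum>t. ennreal ((1 - d u) * m ^ t * mat_pow P (Suc t) u w * d w))"
  proof -
    have e: "\<And>t. ennreal ((1 - d u) * m ^ t * mat_pow P (Suc t) u w * d w)
       = ennreal (1 - d u) * ennreal (m ^ t * mat_pow P (Suc t) u w) * ennreal (d w)"
      using du dw m0 nnP by (simp add: ennreal_mult mult.assoc)
    show ?thesis by (simp only: e ennreal_suminf_cmult ennreal_suminf_multc)
  qed
  also have "\<dots> \<le> absorb_prob d P u w"
    unfolding absorb_prob_def
    by (intro suminf_le summableI ennreal_leI mult_right_mono dw conjunct1[OF B])
  finally have 1: "ennreal (1 - d u) * (\<Sum>t. ennreal (m ^ t * mat_pow P (Suc t) u w)) * ennreal (d w)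
      \<le> absorb_prob d P u w" .
  have "absorb_prob d P u w \<le> (\<Sum>t. ennreal ((1 - d u) * M ^ t * mat_pow P (Suc t) u w * d w))"
    unfolding absorb_prob_def
    by (intro suminf_le summableI ennreal_leI mult_right_mono dw conjunct2[OF B])
  also have "\<dots> = ennreal (1 - d u) * (\<Sum>t. ennreal (M ^ t * mat_pow P (Suc t) u w)) * ennreal (d w)"
  proof -
    have e: "\<And>t. ennreal ((1 - d u) * M ^ t * mat_pow P (Suc t) u w * d w)
       = ennreal (1 - d u) * ennreal (M ^ t * mat_pow P (Suc t) u w) * ennreal (d w)"
      using du dw M0 nnP by (simp add: ennreal_mult mult.assoc)
    show ?thesis by (simp only: e ennreal_suminf_cmult ennreal_suminf_multc)
  qed
  finally show ?thesis using 1 unfolding m_def M_def by simp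
qed

end
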